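(* Let $n\ge2$ and let $\mathcal{H}=\{H_1,\dots,H_n\}$ be a family of graphs. Then $$\dim_l(K_n\circ\mathcal{H})=\sum_{i=1}^n\operatorname{adim}_l(H_i)+\max\{0,|I|-1\},$$ where $I=\{u_i\in V(K_n): H_i\in\mathcal{G}\}$. Furthermore, for a graph $H$: if $H\in\mathcal{G}$ then $\dim_l(K_n\circ H)=n\cdot\operatorname{adim}_l(H)+n-1$, and if $H\notin\mathcal{G}$ then $\dim_l(K_n\circ H)=n\cdot\operatorname{adim}_l(H)$.
   Context: All graphs are finite and simple with at least one vertex; $V(K_n)=\{u_1,\dots,u_n\}$. $d_G$ is shortest-path distance ($+\infty$ between components), $d_{G,2}=\min\{d_G,2\}$; $s$ distinguishes $x,y$ w.r.t. $d$ if $d(s,x)\ne d(s,y)$. $\dim_l(G)$: minimum size of $S\subseteq V(G)$ such that any two adjacent vertices are distinguished w.r.t. $d_G$ by some vertex of $S$. $\operatorname{adim}_l(H)$: minimum size of $S\subseteq V(H)$ such that any two adjacent vertices are distinguished w.r.t. $d_{H,2}$ by some vertex of $S$; minimum such sets are local adjacency bases. $\mathcal{G}$: class of graphs $H$ such that every local adjacency basis $B$ of $H$ satisfies $B\subseteq N_H(v)$ for some $v\in V(H)$. Lexicographic product $G\circ\mathcal{H}$: vertex set $\bigcup_i\{u_i\}\times V(H_i)$, $(u_i,v)\sim(u_j,w)$ iff $u_iu_j\in E(G)$, or $i=j$ and $vw\in E(H_i)$; $G\circ H$ means all $H_i\cong H$. *)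

theory Defs
  imports "HOL-Library.Extended_Nat"
begin

type_synonym 'a graph = "'a set \<times> ('a \<times> 'a) set"

definition is_graph :: "'a graph \<Rightarrow> bool" where
  "is_graph G \<longleftrightarrow> finite (fst G) \<and> fst G \<noteq> {} \<and> snd G \<subseteq> fst G \<times> fst G
     \<and> sym (snd G) \<and> irrefl (snd G)"

definition gdist :: "'a graph \<Rightarrow> 'a \<Rightarrow> 'a \<Rightarrow> enat" where
  "gdist G x y = (if \<exists>k. (x, y) \<in> (snd G) ^^ k
                  then enat (LEAST k. (x, y) \<in> (snd G) ^^ k) else \<infinity>)"

definition gdist2 :: "'a graph \<Rightarrow> 'a \<Rightarrow> 'a \<Rightarrow> enat" where
  "gdist2 G x y = min (gdist G x y) 2"

definition adj_resolving :: "'a graph \<Rightarrow> ('a \<Rightarrow> 'a \<Rightarrow> enat) \<Rightarrow> 'a set \<Rightarrow> bool" where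
  "adj_resolving G d S \<longleftrightarrow> S \<subseteq> fst G \<and>
     (\<forall>x y. (x, y) \<in> snd G \<longrightarrow> (\<exists>s\<in>S. d s x \<noteq> d s y))"

definition local_metric_dim :: "'a graph \<Rightarrow> nat" where
  "local_metric_dim G = Min {card S | S. adj_resolving G (gdist G) S}"

definition local_adj_dim :: "'a graph \<Rightarrow> nat" where
  "local_adj_dim G = Min {card S | S. adj_resolving G (gdist2 G) S}"

definition local_adj_basis :: "'a graph \<Rightarrow> 'a set \<Rightarrow> bool" where
  "local_adj_basis G B \<longleftrightarrow> adj_resolving G (gdist2 G) B \<and> card B = local_adj_dim G"

definition nbhd :: "'a graph \<Rightarrow> 'a \<Rightarrow> 'a set" where
  "nbhd G v = {u. (v, u) \<in> snd G}"

definition classG :: "'a graph \<Rightarrow> bool" where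
  "classG H \<longleftrightarrow> (\<forall>B. local_adj_basis H B \<longrightarrow> (\<exists>v\<in>fst H. B \<subseteq> nbhd H v))"

text \<open>Lexicographic product K_n \<circ> {H_1,...,H_n}; vertex u_i of K_n is represented by i.\<close>
definition lex_Kn :: "nat \<Rightarrow> (nat \<Rightarrow> 'a graph) \<Rightarrow> (nat \<times> 'a) graph" where
  "lex_Kn n H =
    ({(i, v). i \<in> {1..n} \<and> v \<in> fst (H i)},
     {((i, v), (j, w)). i \<in> {1..n} \<and> j \<in> {1..n} \<and> v \<in> fst (H i) \<and> w \<in> fst (H j)
        \<and> (i \<noteq> j \<or> (i = j \<and> (v, w) \<in> snd (H i)))})"

end

theory Submission
  imports Defs
begin

definition dd :: "('a\<times>'a) set \<Rightarrow> 'a \<Rightarrow> 'a \<Rightarrow> enat" where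
  "dd E s x = (if s = x then 0 else if (s,x)\<in>E then 1 else 2)"

lemma relpow_ne0: "(x,y) \<in> (R::('a\<times>'a) set) ^^ k \<Longrightarrow> x \<noteq> y \<Longrightarrow> k \<noteq> 0" by (cases k) auto
lemma relpow_ne1: "(x,y) \<in> (R::('a\<times>'a) set) ^^ k \<Longrightarrow> (x,y) \<notin> R \<Longrightarrow> k \<noteq> 1"
  by auto

lemma gdist_refl: "gdist G x x = 0"
proof -
  have "(x,x) \<in> snd G ^^ 0" by simp
  then have "\<exists>k. (x,x) \<in> snd G ^^ k" by blast
  moreover have "(LEAST k. (x,x) \<in> snd G ^^ k) = 0" by (rule Least_eq_0) simp
  ultimately show ?thesis unfolding gdist_def by (simp add: zero_enat_def)
qed

lemma gdist_adj: assumes "x \<noteq> y" "(x,y)\<in>snd G" shows "gdist G x y = 1"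
proof -
  have "(x,y) \<in> snd G ^^ 1" using assms by simp
  moreover have "(LEAST k. (x,y) \<in> snd G ^^ k) = 1"
    apply (rule Least_equality) using assms relpow_ne0[of x y] by (auto simp: Suc_le_eq) 
  ultimately show ?thesis unfolding gdist_def by (metis one_enat_def)
qed

lemma gdist_ge2: assumes "x \<noteq> y" "(x,y)\<notin>snd G" shows "gdist G x y \<ge> 2"
proof (cases "\<exists>k. (x, y) \<in> (snd G) ^^ k")
  case True
  define m where "m = (LEAST k. (x, y) \<in> (snd G) ^^ k)"
  have "(x,y) \<in> snd G ^^ m" unfolding m_def using True by (rule LeastI_ex)
  then have "m \<noteq> 0" "m \<noteq> 1" using assms relpow_ne0 relpow_ne1 by metis+
  then have "m \<ge> 2" by linarith
  then show ?thesis using True unfolding gdist_def m_def[symmetric]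
    by (simp add: numeral_eq_enat)
next
  case False then show ?thesis unfolding gdist_def by simp
qed

lemma gdist2_dd: "gdist2 G s x = dd (snd G) s x"
  unfolding gdist2_def dd_def using gdist_refl[of G x] gdist_adj[of s x G] gdist_ge2[of s x G]
  by (auto simp: min_def)

lemma gdist_two: assumes "x \<noteq> y" "(x,y)\<notin>snd G" "(x,z)\<in>snd G" "(z,y)\<in>snd G"
  shows "gdist G x y = 2"
proof -
  have P: "(x,y) \<in> snd G ^^ 2" using assms by (auto simp: numeral_2_eq_2)
  have "(LEAST k. (x,y) \<in> snd G ^^ k) = 2"
  proof (rule Least_equality)
    fix k assume "(x,y) \<in> snd G ^^ k"
    then have "k \<noteq> 0" "k \<noteq> 1" using assms relpow_ne0 relpow_ne1 by metis+
    then show "2 \<le> k" by linarith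
  qed (rule P)
  with P show ?thesis unfolding gdist_def by (auto simp: numeral_eq_enat)
qed


lemma gdist2_eq: "gdist2 G = dd (snd G)"
  by (intro ext) (rule gdist2_dd)

definition slice :: "(nat\<times>'a) set \<Rightarrow> nat \<Rightarrow> 'a set" where
  "slice S i = {v. (i,v)\<in>S}"

definition domd :: "'a graph \<Rightarrow> 'a set \<Rightarrow> bool" where
  "domd G T \<longleftrightarrow> (\<exists>v\<in>fst G. T \<subseteq> nbhd G v)"

lemma graph_edge: assumes "is_graph G" "(x,y)\<in>snd G"
  shows "(y,x)\<in>snd G" "x \<noteq> y" "x\<in>fst G" "y\<in>fst G"
  using assms unfolding is_graph_def irrefl_def by (auto dest: symD)

lemma sum_ind: "finite B \<Longrightarrow> (\<Sum>i\<in>B. if i\<in>A then 1 else 0::nat) = card (B \<inter> A)"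
  by (simp add: sum.If_cases)

lemma Min_card_le: assumes "finite V" "\<And>S. Q S \<Longrightarrow> S \<subseteq> V" "Q S"
  shows "Min {card S |S. Q S} \<le> card S"
proof -
  have "{card S |S. Q S} \<subseteq> {..card V}" using assms(1,2) card_mono by fastforce
  then have "finite {card S |S. Q S}" by (rule finite_subset) simp
  then show ?thesis using assms(3) by (intro Min_le) auto
qed

lemma Min_card_in: assumes "finite V" "\<And>S. Q S \<Longrightarrow> S \<subseteq> V" "Q S0"
  shows "\<exists>S. Q S \<and> card S = Min {card S |S. Q S}"
proof -
  have "{card S |S. Q S} \<subseteq> {..card V}" using assms(1,2) card_mono by fastforce
  then have "finite {card S |S. Q S}" by (rule finite_subset) simp
  moreover have "{card S |S. Q S} \<noteq> {}" using assms(3) by auto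
  ultimately have "Min {card S |S. Q S} \<in> {card S |S. Q S}" by (rule Min_in)
  then show ?thesis by auto
qed

lemma Min_card_eq: assumes "finite V" "\<And>S. Q S \<Longrightarrow> S \<subseteq> V" "Q S0" "card S0 = m"
  "\<And>S. Q S \<Longrightarrow> m \<le> card S"
  shows "Min {card S |S. Q S} = m"
proof -
  obtain S where "Q S" "card S = Min {card S |S. Q S}" using Min_card_in[of V Q S0, OF assms(1,2,3)] by blast
  then have "m \<le> Min {card S |S. Q S}" using assms(5) by metis
  moreover have "Min {card S |S. Q S} \<le> m" using Min_card_le[of V Q S0, OF assms(1,2,3)] assms(4) by simp
  ultimately show ?thesis by simp
qed

lemma V_resolving: assumes "is_graph G" shows "adj_resolving G (gdist2 G) (fst G)"
  unfolding adj_resolving_def gdist2_eq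
proof (intro conjI allI impI)
  fix x y assume e: "(x,y) \<in> snd G"
  then have "x \<in> fst G" "x \<noteq> y" using graph_edge[OF assms] by auto
  then show "\<exists>s\<in>fst G. dd (snd G) s x \<noteq> dd (snd G) s y"
    using e by (intro bexI[of _ x]) (auto simp: dd_def)
qed simp

lemma basis_ex: assumes "is_graph G" shows "\<exists>B. local_adj_basis G B"
proof -
  have "finite (fst G)" using assms by (simp add: is_graph_def)
  from Min_card_in[of "fst G" "adj_resolving G (gdist2 G)", OF this _ V_resolving[OF assms]]
  show ?thesis unfolding local_adj_basis_def local_adj_dim_def by (auto simp: adj_resolving_def)
qed

lemma adim_le: assumes "is_graph G" "adj_resolving G (gdist2 G) S"
  shows "local_adj_dim G \<le> card S"
  unfolding local_adj_dim_def
  using assms by (intro Min_card_le[of "fst G"]) (auto simp: is_graph_def adj_resolving_def)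

lemma nondom_ex: assumes "is_graph G"
  shows "\<exists>T. adj_resolving G (gdist2 G) T \<and> card T = local_adj_dim G + (if classG G then 1 else 0)
     \<and> \<not> domd G T"
proof (cases "classG G")
  case False
  then show ?thesis unfolding classG_def domd_def local_adj_basis_def by auto
next
  case True
  obtain B where B: "local_adj_basis G B" using basis_ex[OF assms] by blast
  then obtain v where v: "v \<in> fst G" "B \<subseteq> nbhd G v" using True unfolding classG_def by blast
  have BV: "B \<subseteq> fst G" using B by (simp add: local_adj_basis_def adj_resolving_def)
  have fin: "finite B" using BV assms finite_subset by (auto simp: is_graph_def)
  have vB: "v \<notin> B"
  proof
    assume "v \<in> B" then have "(v,v) \<in> snd G" using v by (auto simp: nbhd_def)
    then show False using graph_edge[OF assms] by blast
  qed
  have res: "adj_resolving G (gdist2 G) (insert v B)"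
    using B v unfolding local_adj_basis_def adj_resolving_def by blast
  have nd: "\<not> domd G (insert v B)"
  proof
    assume "domd G (insert v B)"
    then obtain u where u: "u \<in> fst G" "insert v B \<subseteq> nbhd G u" unfolding domd_def by blast
    then have uv: "(u,v) \<in> snd G" by (auto simp: nbhd_def)
    then obtain b where b: "b \<in> B" "gdist2 G b u \<noteq> gdist2 G b v"
      using B unfolding local_adj_basis_def adj_resolving_def by blast
    have "(u,b) \<in> snd G" using u b by (auto simp: nbhd_def)
    then have 1: "(b,u) \<in> snd G" "b \<noteq> u" using graph_edge[OF assms] by auto
    have "(v,b) \<in> snd G" using v b by (auto simp: nbhd_def)
    then have 2: "(b,v) \<in> snd G" "b \<noteq> v" using graph_edge[OF assms] by auto
    show False using b(2) 1 2 by (simp add: gdist2_dd dd_def)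
  qed
  show ?thesis using res nd True fin vB B by (intro exI[of _ "insert v B"]) (auto simp: local_adj_basis_def)
qed

lemma adj_res_cong: assumes "snd G \<subseteq> fst G \<times> fst G" "\<And>s x. s\<in>fst G \<Longrightarrow> x\<in>fst G \<Longrightarrow> d1 s x = d2 s x"
  shows "adj_resolving G d1 S = adj_resolving G d2 S"
proof (cases "S \<subseteq> fst G")
  case True
  have "\<forall>x y. (x,y)\<in>snd G \<longrightarrow> (\<exists>s\<in>S. d1 s x \<noteq> d1 s y) = (\<exists>s\<in>S. d2 s x \<noteq> d2 s y)"
  proof (intro allI impI)
    fix x y assume e: "(x,y)\<in>snd G"
    then have xy: "x\<in>fst G" "y\<in>fst G" using assms(1) by auto
    have h: "d1 s x = d2 s x \<and> d1 s y = d2 s y" if "s \<in> S" for s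
      using that True xy assms(2) by blast
    show "(\<exists>s\<in>S. d1 s x \<noteq> d1 s y) = (\<exists>s\<in>S. d2 s x \<noteq> d2 s y)"
      by (rule bex_cong[OF refl]) (simp add: h)
  qed
  then show ?thesis unfolding adj_resolving_def by simp
next
  case False then show ?thesis unfolding adj_resolving_def by simp
qed

context
  fixes n :: nat and H :: "nat \<Rightarrow> 'a graph"
  assumes n2: "n \<ge> 2" and gr: "\<forall>i\<in>{1..n}. is_graph (H i)"
begin

lemma EP: "((i,v),(j,w)) \<in> snd (lex_Kn n H) \<longleftrightarrow> i\<in>{1..n} \<and> j\<in>{1..n} \<and> v\<in>fst(H i) \<and> w\<in>fst(H j)
   \<and> (i\<noteq>j \<or> (v,w)\<in>snd(H i))"
  by (auto simp: lex_Kn_def)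

lemma VP: "(i,v) \<in> fst (lex_Kn n H) \<longleftrightarrow> i\<in>{1..n} \<and> v\<in>fst(H i)"
  by (auto simp: lex_Kn_def)

lemma EP_sub: "snd (lex_Kn n H) \<subseteq> fst (lex_Kn n H) \<times> fst (lex_Kn n H)"
  by (auto simp: lex_Kn_def)

lemma finVP: "finite (fst (lex_Kn n H))"
proof -
  have "fst (lex_Kn n H) = (SIGMA i:{1..n}. fst (H i))" by (auto simp: lex_Kn_def)
  moreover have "finite (SIGMA i:{1..n}. fst (H i))" using gr by (auto simp: is_graph_def)
  ultimately show ?thesis by simp
qed

lemma gdistP: assumes "s \<in> fst (lex_Kn n H)" "x \<in> fst (lex_Kn n H)"
  shows "gdist (lex_Kn n H) s x = dd (snd (lex_Kn n H)) s x"
proof (cases "s = x")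
  case True then show ?thesis by (simp add: gdist_refl dd_def)
next
  case ne: False
  show ?thesis
  proof (cases "(s,x) \<in> snd (lex_Kn n H)")
    case True then show ?thesis using ne by (simp add: gdist_adj dd_def)
  next
    case na: False
    obtain i v j w where s: "s = (i,v)" and x: "x = (j,w)" by fastforce
    have iv: "i\<in>{1..n}" "v\<in>fst(H i)" "j\<in>{1..n}" "w\<in>fst(H j)" using assms s x VP by auto
    then have ij: "i = j" using na s x EP by blast
    define k where "k = (if i = 1 then 2 else (1::nat))"
    have k: "k \<in> {1..n}" "k \<noteq> i" using n2 iv unfolding k_def by auto
    have "fst (H k) \<noteq> {}" using gr k(1) by (auto simp: is_graph_def)
    then obtain y where y: "y \<in> fst (H k)" by blast
    have "(s,(k,y)) \<in> snd (lex_Kn n H)" "((k,y),x) \<in> snd (lex_Kn n H)"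
      using s x iv k y ij EP by auto
    then have "gdist (lex_Kn n H) s x = 2" using ne na by (intro gdist_two) auto
    then show ?thesis using ne na by (simp add: dd_def)
  qed
qed

lemma ddP: assumes "k\<in>{1..n}" "x\<in>fst(H k)" "i\<in>{1..n}" "v\<in>fst(H i)"
  shows "dd (snd (lex_Kn n H)) (k,x) (i,v) = (if k \<noteq> i then 1 else dd (snd (H i)) x v)"
  using assms by (auto simp: dd_def EP)

lemma resP_dd: "adj_resolving (lex_Kn n H) (gdist (lex_Kn n H)) S
    = adj_resolving (lex_Kn n H) (dd (snd (lex_Kn n H))) S"
  by (rule adj_res_cong[OF EP_sub gdistP])

lemma necessary1:
  assumes R: "adj_resolving (lex_Kn n H) (gdist (lex_Kn n H)) S" and i: "i\<in>{1..n}"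
  shows "adj_resolving (H i) (gdist2 (H i)) (slice S i)"
proof -
  have R': "adj_resolving (lex_Kn n H) (dd (snd (lex_Kn n H))) S" using R resP_dd by simp
  have SV: "S \<subseteq> fst (lex_Kn n H)" using R by (simp add: adj_resolving_def)
    have g: "is_graph (H i)" using gr i by blast
    show "adj_resolving (H i) (gdist2 (H i)) (slice S i)"
      unfolding adj_resolving_def gdist2_eq
    proof (intro conjI allI impI)
      show "slice S i \<subseteq> fst (H i)" using SV VP by (auto simp: slice_def)
      fix v w assume e: "(v,w) \<in> snd (H i)"
      then have vw: "v\<in>fst (H i)" "w\<in>fst (H i)" using graph_edge[OF g] by auto
      have "((i,v),(i,w)) \<in> snd (lex_Kn n H)" using EP i vw e by auto
      then obtain s where s: "s\<in>S" "dd (snd (lex_Kn n H)) s (i,v) \<noteq> dd (snd (lex_Kn n H)) s (i,w)"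
        using R' unfolding adj_resolving_def by blast
      obtain k x where kx: "s = (k,x)" by fastforce
      have kxV: "k\<in>{1..n}" "x\<in>fst(H k)" using s(1) SV kx VP by auto
      have "k = i" using s(2) unfolding kx ddP[OF kxV i vw(1)] ddP[OF kxV i vw(2)] by presburger
      then show "\<exists>s\<in>slice S i. dd (snd (H i)) s v \<noteq> dd (snd (H i)) s w"
        using s kx ddP[OF kxV i vw(1)] ddP[OF kxV i vw(2)] by (auto simp: slice_def)
    qed
qed

lemma necessary2:
  assumes R: "adj_resolving (lex_Kn n H) (gdist (lex_Kn n H)) S"
    and i: "i\<in>{1..n}" and j: "j\<in>{1..n}" and ij: "i \<noteq> j"
      and di: "domd (H i) (slice S i)"
    shows "\<not> domd (H j) (slice S j)"
    proof
  have R': "adj_resolving (lex_Kn n H) (dd (snd (lex_Kn n H))) S" using R resP_dd by simp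
  have SV: "S \<subseteq> fst (lex_Kn n H)" using R by (simp add: adj_resolving_def)
      assume dj: "domd (H j) (slice S j)"
      obtain v where v: "v\<in>fst (H i)" "slice S i \<subseteq> nbhd (H i) v" using di unfolding domd_def by blast
      obtain w where w: "w\<in>fst (H j)" "slice S j \<subseteq> nbhd (H j) w" using dj unfolding domd_def by blast
      have "((i,v),(j,w)) \<in> snd (lex_Kn n H)" using EP i j v w ij by auto
      then obtain s where s: "s\<in>S" "dd (snd (lex_Kn n H)) s (i,v) \<noteq> dd (snd (lex_Kn n H)) s (j,w)"
        using R' unfolding adj_resolving_def by blast
      obtain k x where kx: "s = (k,x)" by fastforce
      have kxV: "k\<in>{1..n}" "x\<in>fst(H k)" using s(1) SV kx VP by auto
      note e1 = ddP[OF kxV i v(1)] and e2 = ddP[OF kxV j w(1)]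
      have gi: "is_graph (H i)" "is_graph (H j)" using gr i j by auto
      show False
      proof (cases "k = i")
        case True
        then have "x \<in> slice S i" using s kx by (simp add: slice_def)
        then have "(v,x) \<in> snd (H i)" using v by (auto simp: nbhd_def)
        then have "(x,v) \<in> snd (H i)" "x \<noteq> v" using graph_edge[OF gi(1)] by auto
        then show False using s(2) kx e1 e2 True ij by (simp add: dd_def)
      next
        case ki: False
        show False
        proof (cases "k = j")
          case True
          then have "x \<in> slice S j" using s kx by (simp add: slice_def)
          then have "(w,x) \<in> snd (H j)" using w by (auto simp: nbhd_def)
          then have "(x,w) \<in> snd (H j)" "x \<noteq> w" using graph_edge[OF gi(2)] by auto
          then show False using s(2) kx e1 e2 True ki by (simp add: dd_def)
        next
          case False
          then show False using s(2) kx e1 e2 ki by simp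
        qed
      qed
    qed

lemma sufficient:
  assumes SV: "S \<subseteq> fst (lex_Kn n H)"
    and A: "\<And>i. i\<in>{1..n} \<Longrightarrow> adj_resolving (H i) (gdist2 (H i)) (slice S i)"
    and B: "\<And>i j. i\<in>{1..n} \<Longrightarrow> j\<in>{1..n} \<Longrightarrow> i \<noteq> j \<Longrightarrow> domd (H i) (slice S i) \<Longrightarrow> \<not> domd (H j) (slice S j)"
  shows "adj_resolving (lex_Kn n H) (gdist (lex_Kn n H)) S"
proof -
  have "\<exists>s\<in>S. dd (snd (lex_Kn n H)) s p \<noteq> dd (snd (lex_Kn n H)) s q"
    if e: "(p,q) \<in> snd (lex_Kn n H)" for p q
  proof -
  obtain i v j w where p: "p = (i,v)" and q: "q = (j,w)" by fastforce
  have iv: "i\<in>{1..n}" "v\<in>fst(H i)" "j\<in>{1..n}" "w\<in>fst(H j)" and ee: "i\<noteq>j \<or> (v,w)\<in>snd(H i)"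
    using e p q EP by auto
  show "\<exists>s\<in>S. dd (snd (lex_Kn n H)) s p \<noteq> dd (snd (lex_Kn n H)) s q"
  proof (cases "i = j")
    case True
    then have "(v,w) \<in> snd (H i)" using ee by simp
    then obtain x where x: "x \<in> slice S i" "dd (snd (H i)) x v \<noteq> dd (snd (H i)) x w"
      using A[OF iv(1)] unfolding adj_resolving_def gdist2_eq by blast
    have xV: "x \<in> fst (H i)" using x SV VP by (auto simp: slice_def)
    show ?thesis using x True p q ddP[OF iv(1) xV iv(1,2)] ddP[OF iv(1) xV iv(3,4)]
      by (intro bexI[of _ "(i,x)"]) (auto simp: slice_def)
  next
    case ij: False
    have "\<not> domd (H i) (slice S i) \<or> \<not> domd (H j) (slice S j)" using B iv ij by blast
    then show ?thesis
    proof
      assume "\<not> domd (H i) (slice S i)"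
      then obtain x where x: "x \<in> slice S i" "(v,x) \<notin> snd (H i)" using iv
        unfolding domd_def nbhd_def by blast
      have xV: "x \<in> fst (H i)" using x SV VP by (auto simp: slice_def)
      have gi: "is_graph (H i)" using gr iv by auto
      have "(x,v) \<notin> snd (H i)" using x(2) graph_edge[OF gi] by blast
      then show ?thesis using x ij p q ddP[OF iv(1) xV iv(1,2)] ddP[OF iv(1) xV iv(3,4)]
        by (intro bexI[of _ "(i,x)"]) (auto simp: slice_def dd_def)
    next
      assume "\<not> domd (H j) (slice S j)"
      then obtain x where x: "x \<in> slice S j" "(w,x) \<notin> snd (H j)" using iv
        unfolding domd_def nbhd_def by blast
      have xV: "x \<in> fst (H j)" using x SV VP by (auto simp: slice_def)
      have gi: "is_graph (H j)" using gr iv by auto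
      have "(x,w) \<notin> snd (H j)" using x(2) graph_edge[OF gi] by blast
      then show ?thesis using x ij p q ddP[OF iv(3) xV iv(1,2)] ddP[OF iv(3) xV iv(3,4)]
        by (intro bexI[of _ "(j,x)"]) (auto simp: slice_def dd_def)
    qed
  qed
qed
  note X = this
  have "adj_resolving (lex_Kn n H) (dd (snd (lex_Kn n H))) S"
    unfolding adj_resolving_def
  proof (intro conjI allI impI)
    show "S \<subseteq> fst (lex_Kn n H)" by (rule SV)
    fix p q assume "(p,q) \<in> snd (lex_Kn n H)"
    then show "\<exists>s\<in>S. dd (snd (lex_Kn n H)) s p \<noteq> dd (snd (lex_Kn n H)) s q" by (rule X)
  qed
  then show ?thesis by (rule iffD2[OF resP_dd])
qed

lemma SigmaS: assumes "S \<subseteq> fst (lex_Kn n H)"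
  shows "S = (SIGMA i:{1..n}. slice S i)"
  using assms unfolding slice_def lex_Kn_def by auto

lemma cardS: assumes "S \<subseteq> fst (lex_Kn n H)"
  shows "card S = (\<Sum>i=1..n. card (slice S i))"
proof -
  have "\<forall>i\<in>{1..n}. finite (slice S i)"
  proof
    fix i assume i: "i\<in>{1..n}"
    have "slice S i \<subseteq> fst (H i)" using assms VP by (auto simp: slice_def)
    moreover have "finite (fst (H i))" using gr i by (auto simp: is_graph_def)
    ultimately show "finite (slice S i)" by (rule finite_subset)
  qed
  then show ?thesis by (subst SigmaS[OF assms]) (simp add: card_SigmaI)
qed

lemma lower:
  assumes R: "adj_resolving (lex_Kn n H) (gdist (lex_Kn n H)) S"
  shows "(\<Sum>i=1..n. local_adj_dim (H i)) + (card {i\<in>{1..n}. classG (H i)} - 1) \<le> card S"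
proof -
  define I where "I = {i\<in>{1..n}. classG (H i)}"
  define J where "J = {i\<in>I. card (slice S i) = local_adj_dim (H i)}"
  have SV: "S \<subseteq> fst (lex_Kn n H)" using R by (simp add: adj_resolving_def)
  have le: "local_adj_dim (H i) \<le> card (slice S i)" if "i\<in>{1..n}" for i
    using adim_le[OF _ necessary1[OF R that]] gr that by blast
  have Jdom: "domd (H i) (slice S i)" if "i \<in> J" for i
  proof -
    have i: "i\<in>{1..n}" "classG (H i)" "card (slice S i) = local_adj_dim (H i)"
      using that by (auto simp: J_def I_def)
    have "local_adj_basis (H i) (slice S i)"
      using necessary1[OF R i(1)] i(3) by (simp add: local_adj_basis_def)
    then show ?thesis using i(2) by (auto simp: classG_def domd_def)
  qed
  have finJ: "finite J" "finite I" by (auto simp: J_def I_def)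
  have "card J \<le> Suc 0"
    unfolding card_le_Suc0_iff_eq[OF finJ(1)]
  proof (intro ballI)
    fix a b assume a: "a\<in>J" and b: "b\<in>J"
    show "a = b"
    proof (rule ccontr)
      assume "a \<noteq> b"
      then show False using necessary2[OF R _ _ _ Jdom[OF a]] Jdom[OF b] a b
        by (auto simp: J_def I_def)
    qed
  qed
  then have c1: "card I - 1 \<le> card (I - J)" using diff_card_le_card_Diff[OF finJ(1), of I] by linarith
  have "(\<Sum>i=1..n. local_adj_dim (H i)) + card (I - J)
      = (\<Sum>i=1..n. local_adj_dim (H i) + (if i \<in> I - J then 1 else 0))"
  proof -
    have "(\<Sum>i=1..n. (if i \<in> I - J then 1 else 0::nat)) = card ({1..n} \<inter> (I - J))"
      by (rule sum_ind) simp
    also have "{1..n} \<inter> (I - J) = I - J" by (auto simp: I_def)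
    finally show ?thesis by (simp add: sum.distrib)
  qed
  also have "\<dots> \<le> (\<Sum>i=1..n. card (slice S i))"
  proof (rule sum_mono)
    fix i assume i: "i \<in> {1..n}"
    show "local_adj_dim (H i) + (if i \<in> I - J then 1 else 0) \<le> card (slice S i)"
      using le[OF i] i by (auto simp: J_def I_def)
  qed
  also have "\<dots> = card S" using cardS[OF SV] by simp
  finally show ?thesis using c1 unfolding I_def by linarith
qed

lemma upper:
  "\<exists>S. adj_resolving (lex_Kn n H) (gdist (lex_Kn n H)) S \<and>
     card S = (\<Sum>i=1..n. local_adj_dim (H i)) + (card {i\<in>{1..n}. classG (H i)} - 1)"
proof -
  define I where "I = {i\<in>{1..n}. classG (H i)}"
  define i0 where "i0 = (SOME i. i \<in> I)"
  have i0: "I \<noteq> {} \<Longrightarrow> i0 \<in> I" unfolding i0_def by (simp add: some_in_eq)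
  have "\<forall>i. \<exists>T. i \<in> {1..n} \<longrightarrow> adj_resolving (H i) (gdist2 (H i)) T \<and>
     card T = local_adj_dim (H i) + (if classG (H i) \<and> i \<noteq> i0 then 1 else 0)
     \<and> (i \<noteq> i0 \<longrightarrow> \<not> domd (H i) T)"
  proof
    fix i
    show "\<exists>T. i \<in> {1..n} \<longrightarrow> adj_resolving (H i) (gdist2 (H i)) T \<and>
     card T = local_adj_dim (H i) + (if classG (H i) \<and> i \<noteq> i0 then 1 else 0)
     \<and> (i \<noteq> i0 \<longrightarrow> \<not> domd (H i) T)"
    proof (cases "i \<in> {1..n}")
      case True
      then have g: "is_graph (H i)" using gr by blast
      show ?thesis
      proof (cases "i = i0")
        case True
        obtain B where "local_adj_basis (H i) B" using basis_ex[OF g] by blast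
        then show ?thesis using True by (intro exI[of _ B]) (auto simp: local_adj_basis_def)
      next
        case False
        obtain T where "adj_resolving (H i) (gdist2 (H i)) T \<and> card T = local_adj_dim (H i) + (if classG (H i) then 1 else 0)
     \<and> \<not> domd (H i) T" using nondom_ex[OF g] by blast
        then show ?thesis using False by (intro exI[of _ T]) auto
      qed
    qed blast
  qed
  then obtain T where T: "\<And>i. i \<in> {1..n} \<Longrightarrow> adj_resolving (H i) (gdist2 (H i)) (T i) \<and>
     card (T i) = local_adj_dim (H i) + (if classG (H i) \<and> i \<noteq> i0 then 1 else 0)
     \<and> (i \<noteq> i0 \<longrightarrow> \<not> domd (H i) (T i))" by metis
  define S where "S = (SIGMA i:{1..n}. T i)"
  have sl: "slice S i = T i" if "i\<in>{1..n}" for i using that by (auto simp: S_def slice_def)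
  have SV: "S \<subseteq> fst (lex_Kn n H)"
  proof
    fix p assume "p \<in> S"
    then obtain i v where p: "p = (i,v)" "i\<in>{1..n}" "v \<in> T i" by (auto simp: S_def)
    then have "v \<in> fst (H i)" using T[OF p(2)] by (auto simp: adj_resolving_def)
    then show "p \<in> fst (lex_Kn n H)" using p VP by auto
  qed
  have res: "adj_resolving (lex_Kn n H) (gdist (lex_Kn n H)) S"
  proof (rule sufficient[OF SV])
    fix i assume "i\<in>{1..n}" then show "adj_resolving (H i) (gdist2 (H i)) (slice S i)"
      using T sl by simp
  next
    fix i j assume i: "i\<in>{1..n}" and j: "j\<in>{1..n}" and ij: "i \<noteq> j"
      and d: "domd (H i) (slice S i)"
    then have "i = i0" using T[OF i] sl[OF i] by auto
    then show "\<not> domd (H j) (slice S j)" using T[OF j] sl[OF j] ij by auto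
  qed
  have "card S = (\<Sum>i=1..n. card (T i))" using cardS[OF SV] sl by simp
  also have "\<dots> = (\<Sum>i=1..n. local_adj_dim (H i) + (if i \<in> I - {i0} then 1 else 0))"
    using T by (intro sum.cong) (auto simp: I_def)
  also have "\<dots> = (\<Sum>i=1..n. local_adj_dim (H i)) + card (I - {i0})"
  proof -
    have "(\<Sum>i=1..n. (if i \<in> I - {i0} then 1 else 0::nat)) = card ({1..n} \<inter> (I - {i0}))"
      by (rule sum_ind) simp
    also have "{1..n} \<inter> (I - {i0}) = I - {i0}" by (auto simp: I_def)
    finally show ?thesis by (simp add: sum.distrib)
  qed
  also have "card (I - {i0}) = card I - 1"
    using i0 by (cases "I = {}") (auto simp: card_Diff_singleton_if)
  finally show ?thesis using res unfolding I_def by blast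
qed

lemma main:
  "local_metric_dim (lex_Kn n H)
     = (\<Sum>i=1..n. local_adj_dim (H i)) + (card {i\<in>{1..n}. classG (H i)} - 1)"
proof -
  obtain S0 where S0: "adj_resolving (lex_Kn n H) (gdist (lex_Kn n H)) S0"
    "card S0 = (\<Sum>i=1..n. local_adj_dim (H i)) + (card {i\<in>{1..n}. classG (H i)} - 1)"
    using upper by blast
  show ?thesis unfolding local_metric_dim_def
    by (rule Min_card_eq[of "fst (lex_Kn n H)" "adj_resolving (lex_Kn n H) (gdist (lex_Kn n H))" S0, OF finVP _ S0(1) S0(2)])
      (simp add: adj_resolving_def, erule lower)
qed

end

theorem corollary2:
  fixes n :: nat and H :: "nat \<Rightarrow> 'a graph" and H0 :: "'b graph"
  assumes "n \<ge> 2"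
    and "\<forall>i\<in>{1..n}. is_graph (H i)"
    and "is_graph H0"
  shows "local_metric_dim (lex_Kn n H)
           = (\<Sum>i=1..n. local_adj_dim (H i)) + (card {i\<in>{1..n}. classG (H i)} - 1)
     \<and> (classG H0 \<longrightarrow> local_metric_dim (lex_Kn n (\<lambda>_. H0)) = n * local_adj_dim H0 + n - 1)
     \<and> (\<not> classG H0 \<longrightarrow> local_metric_dim (lex_Kn n (\<lambda>_. H0)) = n * local_adj_dim H0)"
proof -
  have m0: "local_metric_dim (lex_Kn n (\<lambda>_. H0))
     = (\<Sum>i=1..n. local_adj_dim H0) + (card {i\<in>{1..n}. classG H0} - 1)"
    using main[of n "\<lambda>_. H0"] assms by simp
  have s: "(\<Sum>i=1..n. local_adj_dim H0) = n * local_adj_dim H0" by simp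
  have "{i\<in>{1..n}. classG H0} = (if classG H0 then {1..n} else {})" by auto
  then have c: "card {i\<in>{1..n}. classG H0} = (if classG H0 then n else 0)" by simp
  show ?thesis using main[OF assms(1,2)] m0 s c assms(1) by auto
qed

end
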